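(* Let $E$ be an $\mathbb{R}$-group, $X$ a locally compact (Hausdorff) space not reduced to one point, and $\mathcal{H}=(H_\varepsilon)_{\varepsilon\in E}$ a continuous absorptive action of $E$ on $X$ with center $\omega$. Then: (i) there is a neighbourhood base at $\omega$ consisting of balanced absorbent sets; (ii) a set $T\subset X$ is bounded if and only if it is relatively compact; (iii) elementary sets exist; moreover, if $F$ is an elementary set, then the sets $H_n(F)$, $n$ ranging over the positive integers (viewed as elements of $E$), form a neighbourhood base at $\omega$, and the sets $H_{n^{-1}}(F)$, $n$ ranging over the positive integers, cover $X$.
   Context: An $\mathbb{R}$-group is an abelian group $E$ (operation written multiplicatively) whose underlying set is a subset of $\mathbb{R}$ containing all positive integers, such that: (RG1) with the natural order of $\mathbb{R}$, $E$ is a totally ordered group; (RG2) with the topology induced from $\mathbb{R}$, $E$ is a locally compact group; (RG3) there is a nonconstant continuous homomorphism $h:E\to\mathbb{R}_+^*$ such that for every $\alpha\in E$ the set $\{\varepsilon\in E:\varepsilon\ge\alpha\}$ is integrable for $h\cdot m$, $m$ a Haar measure on $E$. $e$ is the identity of $E$, $\varepsilon^{-1}$ the group inverse, $\theta=\inf E\in\mathbb{R}\cup\{\pm\infty\}$; inequalities refer to the order of $\mathbb{R}$. An action of $E$ on $X$ is a family $\mathcal{H}=(H_\varepsilon)_{\varepsilon\in E}$ of bijections of $X$ with $H_\varepsilon\circ H_{\varepsilon'}=H_{\varepsilon\varepsilon'}$, $H_e=\mathrm{id}_X$; it is continuous if $(\varepsilon,x)\mapsto H_\varepsilon(x)$ is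 continuous on $E\times X$. It is absorptive if some $\omega\in X$ satisfies (ABS): for every neighbourhood $V$ of $\omega$ and every $x\in X$ there are a neighbourhood $U$ of $x$ and $\alpha\in E$ with $H_{\varepsilon^{-1}}(U)\subset V$ for all $\varepsilon\le\alpha$. For a continuous absorptive action such $\omega$ is unique and called the center. For $T,S\subset X$: $T$ absorbs $S$ if there is $\alpha\in E$ with $H_{\varepsilon^{-1}}(S)\subset T$ for all $\varepsilon\le\alpha$; $T$ is absorbent if it absorbs every singleton $\{x\}$, $x\in X$; $T$ is balanced if $H_{\varepsilon^{-1}}(T)\subset T$ for all $\varepsilon\le e$. $T$ is bounded if it is absorbed by every neighbourhood of the center $\omega$. $T$ is elementary if it is a balanced relatively compact neighbourhood of $\omega$. *)

theory Defs
  imports "HOL-Analysis.Analysis" "HOL-Algebra.Group"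
begin

text \<open>An R-group is represented by a HOL-Algebra monoid record G whose carrier is a set of
reals; the group operation is the abstract multiplication of G (not real multiplication),
while the order and the topology are those induced from the real line.\<close>

text \<open>A Haar measure on the locally compact group E = carrier G: a nonzero measure on the
Borel sets of E, invariant under translations, finite on compact sets. (On a second-countable
locally compact space such a measure is automatically Radon.)\<close>

definition haar_measure :: "real monoid \<Rightarrow> real measure \<Rightarrow> bool" where
  "haar_measure G m \<longleftrightarrow>
     space m = carrier G \<and>
     sets m = sets (restrict_space borel (carrier G)) \<and>
     (\<forall>a\<in>carrier G. \<forall>A\<in>sets m.
        (\<lambda>x. a \<otimes>\<^bsub>G\<^esub> x) ` A \<in> sets m \<and>
        emeasure m ((\<lambda>x. a \<otimes>\<^bsub>G\<^esub> x) ` A) = emeasure m A) \<and>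
     (\<forall>K. K \<subseteq> carrier G \<and> compact K \<longrightarrow> emeasure m K < \<infinity>) \<and>
     emeasure m (carrier G) \<noteq> 0"

definition R_group :: "real monoid \<Rightarrow> bool" where
  "R_group G \<longleftrightarrow>
     comm_group G \<and>
     {x::real. \<exists>n::nat. n \<ge> 1 \<and> x = real n} \<subseteq> carrier G \<and>
     \<comment> \<open>(RG1) totally ordered group for the natural order of the reals\<close>
     (\<forall>a\<in>carrier G. \<forall>b\<in>carrier G. \<forall>c\<in>carrier G.
        a \<le> b \<longrightarrow> a \<otimes>\<^bsub>G\<^esub> c \<le> b \<otimes>\<^bsub>G\<^esub> c) \<and>
     \<comment> \<open>(RG2) locally compact topological group for the induced topology\<close>
     continuous_on (carrier G \<times> carrier G) (\<lambda>(x, y). x \<otimes>\<^bsub>G\<^esub> y) \<and>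
     continuous_on (carrier G) (\<lambda>x. inv\<^bsub>G\<^esub> x) \<and>
     locally_compact_space (top_of_set (carrier G)) \<and>
     \<comment> \<open>(RG3)\<close>
     (\<exists>h :: real \<Rightarrow> real.
        continuous_on (carrier G) h \<and>
        (\<forall>x\<in>carrier G. h x > 0) \<and>
        (\<forall>x\<in>carrier G. \<forall>y\<in>carrier G. h (x \<otimes>\<^bsub>G\<^esub> y) = h x * h y) \<and>
        (\<exists>x\<in>carrier G. \<exists>y\<in>carrier G. h x \<noteq> h y) \<and>
        (\<exists>m. haar_measure G m \<and>
           (\<forall>\<alpha>\<in>carrier G. set_integrable m {\<epsilon>\<in>carrier G. \<alpha> \<le> \<epsilon>} h)))"

definition nbhd :: "'a topology \<Rightarrow> 'a \<Rightarrow> 'a set \<Rightarrow> bool" where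
  "nbhd X x N \<longleftrightarrow> N \<subseteq> topspace X \<and> (\<exists>U. openin X U \<and> x \<in> U \<and> U \<subseteq> N)"

definition is_action :: "real monoid \<Rightarrow> 'a topology \<Rightarrow> (real \<Rightarrow> 'a \<Rightarrow> 'a) \<Rightarrow> bool" where
  "is_action G X H \<longleftrightarrow>
     (\<forall>\<epsilon>\<in>carrier G. bij_betw (H \<epsilon>) (topspace X) (topspace X)) \<and>
     (\<forall>\<epsilon>\<in>carrier G. \<forall>\<epsilon>'\<in>carrier G. \<forall>x\<in>topspace X.
        H \<epsilon> (H \<epsilon>' x) = H (\<epsilon> \<otimes>\<^bsub>G\<^esub> \<epsilon>') x) \<and>
     (\<forall>x\<in>topspace X. H \<one>\<^bsub>G\<^esub> x = x)"

definition continuous_action :: "real monoid \<Rightarrow> 'a topology \<Rightarrow> (real \<Rightarrow> 'a \<Rightarrow> 'a) \<Rightarrow> bool" where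
  "continuous_action G X H \<longleftrightarrow> is_action G X H \<and>
     continuous_map (prod_topology (top_of_set (carrier G)) X) X (\<lambda>(\<epsilon>, x). H \<epsilon> x)"

definition absorptive_center :: "real monoid \<Rightarrow> 'a topology \<Rightarrow> (real \<Rightarrow> 'a \<Rightarrow> 'a) \<Rightarrow> 'a \<Rightarrow> bool" where
  "absorptive_center G X H \<omega> \<longleftrightarrow> \<omega> \<in> topspace X \<and>
     (\<forall>V. nbhd X \<omega> V \<longrightarrow> (\<forall>x\<in>topspace X. \<exists>U \<alpha>. nbhd X x U \<and> \<alpha> \<in> carrier G \<and>
        (\<forall>\<epsilon>\<in>carrier G. \<epsilon> \<le> \<alpha> \<longrightarrow> H (inv\<^bsub>G\<^esub> \<epsilon>) ` U \<subseteq> V)))"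

definition absorbs :: "real monoid \<Rightarrow> (real \<Rightarrow> 'a \<Rightarrow> 'a) \<Rightarrow> 'a set \<Rightarrow> 'a set \<Rightarrow> bool" where
  "absorbs G H T S \<longleftrightarrow>
     (\<exists>\<alpha>\<in>carrier G. \<forall>\<epsilon>\<in>carrier G. \<epsilon> \<le> \<alpha> \<longrightarrow> H (inv\<^bsub>G\<^esub> \<epsilon>) ` S \<subseteq> T)"

definition absorbent :: "real monoid \<Rightarrow> 'a topology \<Rightarrow> (real \<Rightarrow> 'a \<Rightarrow> 'a) \<Rightarrow> 'a set \<Rightarrow> bool" where
  "absorbent G X H T \<longleftrightarrow> (\<forall>x\<in>topspace X. absorbs G H T {x})"

definition balanced :: "real monoid \<Rightarrow> (real \<Rightarrow> 'a \<Rightarrow> 'a) \<Rightarrow> 'a set \<Rightarrow> bool" where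
  "balanced G H T \<longleftrightarrow>
     (\<forall>\<epsilon>\<in>carrier G. \<epsilon> \<le> \<one>\<^bsub>G\<^esub> \<longrightarrow> H (inv\<^bsub>G\<^esub> \<epsilon>) ` T \<subseteq> T)"

definition bounded_set :: "real monoid \<Rightarrow> 'a topology \<Rightarrow> (real \<Rightarrow> 'a \<Rightarrow> 'a) \<Rightarrow> 'a \<Rightarrow> 'a set \<Rightarrow> bool" where
  "bounded_set G X H \<omega> T \<longleftrightarrow> (\<forall>V. nbhd X \<omega> V \<longrightarrow> absorbs G H V T)"

definition relatively_compact :: "'a topology \<Rightarrow> 'a set \<Rightarrow> bool" where
  "relatively_compact X T \<longleftrightarrow> compactin X (X closure_of T)"

definition elementary :: "real monoid \<Rightarrow> 'a topology \<Rightarrow> (real \<Rightarrow> 'a \<Rightarrow> 'a) \<Rightarrow> 'a \<Rightarrow> 'a set \<Rightarrow> bool" where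
  "elementary G X H \<omega> T \<longleftrightarrow>
     balanced G H T \<and> relatively_compact X T \<and> nbhd X \<omega> T"

end

theory Submission
  imports Defs
begin

locale ctx =
  fixes G :: "real monoid" (structure) and X :: "'a topology" and H :: "real \<Rightarrow> 'a \<Rightarrow> 'a" and \<omega> :: 'a
  assumes cg: "comm_group G"
    and nat_in: "\<And>n::nat. n \<ge> 1 \<Longrightarrow> real n \<in> carrier G"
    and ord: "\<And>a b c. a \<in> carrier G \<Longrightarrow> b \<in> carrier G \<Longrightarrow> c \<in> carrier G \<Longrightarrow> a \<le> b
               \<Longrightarrow> a \<otimes>\<^bsub>G\<^esub> c \<le> b \<otimes>\<^bsub>G\<^esub> c"
    and act: "continuous_action G X H"
    and absc: "absorptive_center G X H \<omega>"
    and haus: "Hausdorff_space X"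
    and lc: "locally_compact_space X"
begin

sublocale comm_group G by (rule cg)

lemma inv_mono:
  assumes a: "a \<in> carrier G" and b: "b \<in> carrier G" and le: "a \<le> b"
  shows "inv b \<le> inv a"
proof -
  have "a \<otimes> (inv a \<otimes> inv b) \<le> b \<otimes> (inv a \<otimes> inv b)"
    using ord[OF a b _ le] a b by simp
  moreover have "a \<otimes> (inv a \<otimes> inv b) = inv b" using a b by (simp flip: m_assoc)
  moreover have "b \<otimes> (inv a \<otimes> inv b) = inv a" using a b
    by (metis inv_closed m_comm r_inv r_one m_assoc)
  ultimately show ?thesis by simp
qed

lemma exists_nat:
  assumes a: "\<alpha> \<in> carrier G"
  shows "\<exists>n::nat. n \<ge> 1 \<and> inv (real n) \<le> \<alpha>"
proof -
  define n where "n = nat (ceiling (max 1 (inv \<alpha>)))"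
  have n1: "n \<ge> 1" unfolding n_def by linarith
  have "inv \<alpha> \<le> real n" unfolding n_def by linarith
  from inv_mono[OF _ nat_in[OF n1] this] a have "inv (real n) \<le> \<alpha>" by simp
  with n1 show ?thesis by blast
qed

lemma H_mult: "a \<in> carrier G \<Longrightarrow> b \<in> carrier G \<Longrightarrow> x \<in> topspace X \<Longrightarrow> H a (H b x) = H (a \<otimes> b) x"
  using act unfolding continuous_action_def is_action_def by blast

lemma H_one: "x \<in> topspace X \<Longrightarrow> H \<one> x = x"
  using act unfolding continuous_action_def is_action_def by blast

lemma H_in: "a \<in> carrier G \<Longrightarrow> x \<in> topspace X \<Longrightarrow> H a x \<in> topspace X"
  using act unfolding continuous_action_def is_action_def bij_betw_def by blast

lemma H_inv_cancel: "a \<in> carrier G \<Longrightarrow> x \<in> topspace X \<Longrightarrow> H a (H (inv a) x) = x"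
  by (simp add: H_mult H_one)

lemma H_cancel_inv: "a \<in> carrier G \<Longrightarrow> x \<in> topspace X \<Longrightarrow> H (inv a) (H a x) = x"
  by (simp add: H_mult H_one)

lemma H_cont: assumes a: "a \<in> carrier G" shows "continuous_map X X (H a)"
proof -
  have c: "continuous_map (prod_topology (top_of_set (carrier G)) X) X (\<lambda>(\<epsilon>, x). H \<epsilon> x)"
    using act unfolding continuous_action_def by blast
  have "continuous_map X (prod_topology (top_of_set (carrier G)) X) (\<lambda>x. (a, x))"
    by (intro continuous_map_pairedI) (use a in auto)
  from continuous_map_compose[OF this c] show ?thesis by (simp add: o_def)
qed

lemma H_open: assumes a: "a \<in> carrier G" and U: "openin X U" shows "openin X (H a ` U)"
proof -
  have U': "U \<subseteq> topspace X" using U openin_subset by blast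
  have "H a ` U = {x \<in> topspace X. H (inv a) x \<in> U}"
  proof
    show "H a ` U \<subseteq> {x \<in> topspace X. H (inv a) x \<in> U}"
      using U' a H_in H_cancel_inv by auto
    show "{x \<in> topspace X. H (inv a) x \<in> U} \<subseteq> H a ` U"
    proof
      fix x assume "x \<in> {x \<in> topspace X. H (inv a) x \<in> U}"
      then show "x \<in> H a ` U" using a H_inv_cancel by (metis (no_types, lifting) image_eqI mem_Collect_eq)
    qed
  qed
  then show ?thesis using openin_continuous_map_preimage[OF H_cont U] a by simp
qed

lemma \<omega>_in: "\<omega> \<in> topspace X" using absc unfolding absorptive_center_def by blast

lemma ABS: "nbhd X \<omega> V \<Longrightarrow> x \<in> topspace X \<Longrightarrow> \<exists>U \<alpha>. nbhd X x U \<and> \<alpha> \<in> carrier G \<and>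
        (\<forall>\<epsilon>\<in>carrier G. \<epsilon> \<le> \<alpha> \<longrightarrow> H (inv \<epsilon>) ` U \<subseteq> V)"
  using absc unfolding absorptive_center_def by blast

lemma ABS_open: assumes "nbhd X \<omega> V" "x \<in> topspace X"
  shows "\<exists>U \<alpha>. openin X U \<and> x \<in> U \<and> \<alpha> \<in> carrier G \<and>
        (\<forall>\<epsilon>\<in>carrier G. \<epsilon> \<le> \<alpha> \<longrightarrow> H (inv \<epsilon>) ` U \<subseteq> V)"
proof -
  obtain U \<alpha> where "nbhd X x U" "\<alpha> \<in> carrier G" "\<forall>\<epsilon>\<in>carrier G. \<epsilon> \<le> \<alpha> \<longrightarrow> H (inv \<epsilon>) ` U \<subseteq> V"
    using ABS[OF assms] by blast
  moreover obtain U' where "openin X U'" "x \<in> U'" "U' \<subseteq> U" using \<open>nbhd X x U\<close> unfolding nbhd_def by blast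
  ultimately show ?thesis by (meson image_mono order_trans)
qed

lemma open_nbhd: "openin X U \<Longrightarrow> x \<in> U \<Longrightarrow> nbhd X x U"
  unfolding nbhd_def using openin_subset by blast

lemma fixed: assumes d: "\<delta> \<in> carrier G" shows "H \<delta> \<omega> = \<omega>"
proof (rule ccontr)
  assume ne: "H \<delta> \<omega> \<noteq> \<omega>"
  have y: "H \<delta> \<omega> \<in> topspace X" using H_in[OF d \<omega>_in] .
  obtain A B where A: "openin X A" and B: "openin X B" and yA: "H \<delta> \<omega> \<in> A" and wB: "\<omega> \<in> B"
    and dj: "disjnt A B"
    using haus ne y \<omega>_in unfolding Hausdorff_space_def by blast
  define P where "P = {x \<in> topspace X. H \<delta> x \<in> A}"
  have P: "openin X P" unfolding P_def by (rule openin_continuous_map_preimage[OF H_cont[OF d] A])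
  have wP: "\<omega> \<in> P" unfolding P_def using yA \<omega>_in by simp
  obtain U1 \<alpha>1 where U1: "openin X U1" "\<omega> \<in> U1" "\<alpha>1 \<in> carrier G"
    "\<forall>\<epsilon>\<in>carrier G. \<epsilon> \<le> \<alpha>1 \<longrightarrow> H (inv \<epsilon>) ` U1 \<subseteq> P"
    using ABS_open[OF open_nbhd[OF P wP] \<omega>_in] by blast
  obtain U2 \<alpha>2 where U2: "openin X U2" "\<omega> \<in> U2" "\<alpha>2 \<in> carrier G"
    "\<forall>\<epsilon>\<in>carrier G. \<epsilon> \<le> \<alpha>2 \<longrightarrow> H (inv \<epsilon>) ` U2 \<subseteq> B"
    using ABS_open[OF open_nbhd[OF B wB] \<omega>_in] by blast
  define \<epsilon> where "\<epsilon> = min \<alpha>1 (\<alpha>2 \<otimes> \<delta>)"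
  have e: "\<epsilon> \<in> carrier G" unfolding \<epsilon>_def using U1(3) U2(3) d by (simp add: min_def)
  have "\<epsilon> \<le> \<alpha>1" unfolding \<epsilon>_def by simp
  hence "H (inv \<epsilon>) \<omega> \<in> P" using U1(2,4) e by blast
  hence 1: "H \<delta> (H (inv \<epsilon>) \<omega>) \<in> A" unfolding P_def by simp
  have "\<epsilon> \<otimes> inv \<delta> \<le> (\<alpha>2 \<otimes> \<delta>) \<otimes> inv \<delta>"
    using ord[OF e _ _ , of "\<alpha>2 \<otimes> \<delta>" "inv \<delta>"] U2(3) d unfolding \<epsilon>_def by auto
  also have "\<dots> = \<alpha>2" using U2(3) d by (simp add: m_assoc)
  finally have "H (inv (\<epsilon> \<otimes> inv \<delta>)) \<omega> \<in> B" using U2(2,4) e d by auto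
  moreover have "inv (\<epsilon> \<otimes> inv \<delta>) = \<delta> \<otimes> inv \<epsilon>" using e d by (simp add: inv_mult m_comm)
  ultimately have "H \<delta> (H (inv \<epsilon>) \<omega>) \<in> B" using H_mult e d \<omega>_in by simp
  with 1 dj show False unfolding disjnt_def by blast
qed

lemma absorbs_empty: "absorbs G H V {}"
  unfolding absorbs_def by auto

lemma absorbs_Un: assumes "absorbs G H V S1" "absorbs G H V S2" shows "absorbs G H V (S1 \<union> S2)"
proof -
  obtain a1 where a1: "a1 \<in> carrier G" "\<forall>\<epsilon>\<in>carrier G. \<epsilon> \<le> a1 \<longrightarrow> H (inv \<epsilon>) ` S1 \<subseteq> V"
    using assms(1) unfolding absorbs_def by blast
  obtain a2 where a2: "a2 \<in> carrier G" "\<forall>\<epsilon>\<in>carrier G. \<epsilon> \<le> a2 \<longrightarrow> H (inv \<epsilon>) ` S2 \<subseteq> V"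
    using assms(2) unfolding absorbs_def by blast
  have "min a1 a2 \<in> carrier G" using a1 a2 by (simp add: min_def)
  moreover have "\<forall>\<epsilon>\<in>carrier G. \<epsilon> \<le> min a1 a2 \<longrightarrow> H (inv \<epsilon>) ` (S1 \<union> S2) \<subseteq> V"
  proof (intro ballI impI)
    fix \<epsilon> assume "\<epsilon> \<in> carrier G" "\<epsilon> \<le> min a1 a2"
    then show "H (inv \<epsilon>) ` (S1 \<union> S2) \<subseteq> V" using a1(2)[rule_format, of \<epsilon>] a2(2)[rule_format, of \<epsilon>]
      by (simp add: image_Un)
  qed
  ultimately show ?thesis unfolding absorbs_def by blast
qed

lemma absorbs_mono: "absorbs G H V S \<Longrightarrow> T \<subseteq> S \<Longrightarrow> absorbs G H V T"
  unfolding absorbs_def by blast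

lemma absorbs_compact:
  assumes V: "nbhd X \<omega> V" and C: "compactin X C"
  shows "absorbs G H V C"
proof -
  have "\<forall>x\<in>topspace X. \<exists>U \<alpha>. openin X U \<and> x \<in> U \<and> \<alpha> \<in> carrier G \<and>
        (\<forall>\<epsilon>\<in>carrier G. \<epsilon> \<le> \<alpha> \<longrightarrow> H (inv \<epsilon>) ` U \<subseteq> V)"
    using ABS_open[OF V] by blast
  then obtain Uf where Uf: "\<forall>x\<in>topspace X. \<exists>\<alpha>. openin X (Uf x) \<and> x \<in> Uf x \<and> \<alpha> \<in> carrier G \<and>
        (\<forall>\<epsilon>\<in>carrier G. \<epsilon> \<le> \<alpha> \<longrightarrow> H (inv \<epsilon>) ` (Uf x) \<subseteq> V)"
    by metis
  have abs1: "absorbs G H V (Uf x)" if "x \<in> topspace X" for x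
    using Uf that unfolding absorbs_def by blast
  have Ct: "C \<subseteq> topspace X" using C compactin_subset_topspace by blast
  have "(\<forall>U\<in>Uf ` C. openin X U) \<and> C \<subseteq> \<Union>(Uf ` C)" using Uf Ct by blast
  then obtain \<F> where F: "finite \<F>" "\<F> \<subseteq> Uf ` C" "C \<subseteq> \<Union>\<F>"
    using C unfolding compactin_def by meson
  then obtain C' where C': "C' \<subseteq> C" "finite C'" "\<F> = Uf ` C'"
    by (meson finite_subset_image)
  have "absorbs G H V (\<Union>(Uf ` C'))" using C'(2,1)
  proof (induction C' rule: finite_induct)
    case empty then show ?case by (simp add: absorbs_empty)
  next
    case (insert x F)
    have "x \<in> topspace X" using insert Ct by blast
    then show ?case using absorbs_Un[OF abs1 insert.IH] insert by simp
  qed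
  then show ?thesis using F(3) C'(3) absorbs_mono by blast
qed

lemma part1:
  assumes V: "nbhd X \<omega> V"
  shows "\<exists>W. nbhd X \<omega> W \<and> W \<subseteq> V \<and> balanced G H W \<and> absorbent G X H W"
proof -
  obtain V0 where V0: "openin X V0" "\<omega> \<in> V0" "V0 \<subseteq> V" using V unfolding nbhd_def by blast
  obtain U0 \<alpha> where U0: "openin X U0" "\<omega> \<in> U0" "\<alpha> \<in> carrier G"
    "\<forall>\<epsilon>\<in>carrier G. \<epsilon> \<le> \<alpha> \<longrightarrow> H (inv \<epsilon>) ` U0 \<subseteq> V0"
    using ABS_open[OF open_nbhd[OF V0(1,2)] \<omega>_in] by blast
  have U0t: "U0 \<subseteq> topspace X" using U0(1) openin_subset by blast
  define W where "W = (\<Union>\<epsilon>\<in>{\<epsilon>\<in>carrier G. \<epsilon> \<le> \<alpha>}. H (inv \<epsilon>) ` U0)"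
  have WV: "W \<subseteq> V" unfolding W_def using U0(4) V0(3) by blast
  have Wt: "W \<subseteq> topspace X" unfolding W_def using U0t H_in by auto
  define Ob where "Ob = H (inv \<alpha>) ` U0"
  have Ob: "openin X Ob" unfolding Ob_def using H_open U0 by simp
  have wO: "\<omega> \<in> Ob" unfolding Ob_def using fixed[of "inv \<alpha>"] U0 by (metis image_eqI inv_closed)
  have OW: "Ob \<subseteq> W" unfolding Ob_def W_def using U0(3) by blast
  have nW: "nbhd X \<omega> W" unfolding nbhd_def using Wt Ob wO OW by blast
  have bal: "balanced G H W" unfolding balanced_def
  proof (intro ballI impI subsetI)
    fix \<delta> y assume d: "\<delta> \<in> carrier G" "\<delta> \<le> \<one>" and y: "y \<in> H (inv \<delta>) ` W"
    then obtain \<epsilon> u where e: "\<epsilon> \<in> carrier G" "\<epsilon> \<le> \<alpha>" "u \<in> U0" "y = H (inv \<delta>) (H (inv \<epsilon>) u)"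
      unfolding W_def by blast
    have "\<delta> \<otimes> \<epsilon> \<le> \<one> \<otimes> \<epsilon>" using ord[OF d(1) _ e(1) d(2)] by simp
    hence le: "\<delta> \<otimes> \<epsilon> \<le> \<alpha>" using e by simp
    have "y = H (inv \<delta> \<otimes> inv \<epsilon>) u" using e d U0t H_mult[of "inv \<delta>" "inv \<epsilon>" u] by auto
    also have "inv \<delta> \<otimes> inv \<epsilon> = inv (\<delta> \<otimes> \<epsilon>)" using e d by (simp add: inv_mult m_comm)
    finally have "y = H (inv (\<delta> \<otimes> \<epsilon>)) u" .
    then show "y \<in> W" unfolding W_def using le e d by blast
  qed
  have abt: "absorbent G X H W" unfolding absorbent_def
  proof
    fix x assume x: "x \<in> topspace X"
    obtain U' \<alpha>' where "openin X U'" "x \<in> U'" "\<alpha>' \<in> carrier G"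
      "\<forall>\<epsilon>\<in>carrier G. \<epsilon> \<le> \<alpha>' \<longrightarrow> H (inv \<epsilon>) ` U' \<subseteq> Ob"
      using ABS_open[OF open_nbhd[OF Ob wO] x] by blast
    then show "absorbs G H W {x}" unfolding absorbs_def using OW by blast
  qed
  show ?thesis using nW WV bal abt by blast
qed

lemma part2:
  assumes T: "T \<subseteq> topspace X"
  shows "bounded_set G X H \<omega> T \<longleftrightarrow> relatively_compact X T"
proof
  assume rc: "relatively_compact X T"
  show "bounded_set G X H \<omega> T" unfolding bounded_set_def
  proof (intro allI impI)
    fix V assume "nbhd X \<omega> V"
    from absorbs_compact[OF this rc[unfolded relatively_compact_def]]
    show "absorbs G H V T" using absorbs_mono closure_of_subset[OF T] by blast
  qed
next
  assume b: "bounded_set G X H \<omega> T"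
  obtain U K where UK: "openin X U" "compactin X K" "\<omega> \<in> U" "U \<subseteq> K"
    using lc \<omega>_in unfolding locally_compact_space_def by blast
  have "nbhd X \<omega> K" unfolding nbhd_def using UK compactin_subset_topspace by blast
  then obtain \<alpha> where a: "\<alpha> \<in> carrier G" "\<forall>\<epsilon>\<in>carrier G. \<epsilon> \<le> \<alpha> \<longrightarrow> H (inv \<epsilon>) ` T \<subseteq> K"
    using b unfolding bounded_set_def absorbs_def by blast
  have TK: "T \<subseteq> H \<alpha> ` K"
  proof
    fix t assume t: "t \<in> T"
    have "H (inv \<alpha>) t \<in> K" using a t by blast
    moreover have "t = H \<alpha> (H (inv \<alpha>) t)" using H_inv_cancel a t T by auto
    ultimately show "t \<in> H \<alpha> ` K" by blast
  qed
  have cK: "compactin X (H \<alpha> ` K)" using image_compactin[OF UK(2) H_cont[OF a(1)]] .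
  have "X closure_of T \<subseteq> H \<alpha> ` K"
    using closure_of_minimal[OF TK compactin_imp_closedin[OF haus cK]] .
  then show "relatively_compact X T" unfolding relatively_compact_def
    using closed_compactin[OF cK] closedin_closure_of by blast
qed

lemma part3a: "\<exists>F. elementary G X H \<omega> F"
proof -
  obtain U K where UK: "openin X U" "compactin X K" "\<omega> \<in> U" "U \<subseteq> K"
    using lc \<omega>_in unfolding locally_compact_space_def by blast
  obtain W where W: "nbhd X \<omega> W" "W \<subseteq> U" "balanced G H W"
    using part1[OF open_nbhd[OF UK(1,3)]] by blast
  have "X closure_of W \<subseteq> K"
    using closure_of_minimal[OF _ compactin_imp_closedin[OF haus UK(2)]] W(2) UK(4) by blast
  then have "relatively_compact X W" unfolding relatively_compact_def
    using closed_compactin[OF UK(2)] closedin_closure_of by blast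
  then show ?thesis unfolding elementary_def using W by blast
qed

lemma part3b:
  assumes F: "elementary G X H \<omega> F"
  shows "(\<forall>n::nat. n \<ge> 1 \<longrightarrow> nbhd X \<omega> (H (real n) ` F))
        \<and> (\<forall>V. nbhd X \<omega> V \<longrightarrow> (\<exists>n::nat. n \<ge> 1 \<and> H (real n) ` F \<subseteq> V))
        \<and> (\<Union>n\<in>{n::nat. n \<ge> 1}. H (inv (real n)) ` F) = topspace X"
proof (intro conjI allI impI)
  have nF: "nbhd X \<omega> F" using F unfolding elementary_def by blast
  then have Ft: "F \<subseteq> topspace X" unfolding nbhd_def by blast
  fix n :: nat assume n: "n \<ge> 1"
  have nc: "real n \<in> carrier G" using nat_in[OF n] .
  obtain U where U: "openin X U" "\<omega> \<in> U" "U \<subseteq> F" using nF unfolding nbhd_def by blast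
  have "openin X (H (real n) ` U)" using H_open[OF nc U(1)] .
  moreover have "\<omega> \<in> H (real n) ` U" using fixed[OF nc] U(2) by (metis image_eqI)
  moreover have "H (real n) ` F \<subseteq> topspace X" using Ft H_in nc by auto
  ultimately show "nbhd X \<omega> (H (real n) ` F)" unfolding nbhd_def using U(3) by blast
next
  have nF: "nbhd X \<omega> F" using F unfolding elementary_def by blast
  then have Ft: "F \<subseteq> topspace X" unfolding nbhd_def by blast
  fix V assume V: "nbhd X \<omega> V"
  have rc: "compactin X (X closure_of F)" using F unfolding elementary_def relatively_compact_def by blast
  obtain \<alpha> where a: "\<alpha> \<in> carrier G" "\<forall>\<epsilon>\<in>carrier G. \<epsilon> \<le> \<alpha> \<longrightarrow> H (inv \<epsilon>) ` F \<subseteq> V"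
    using absorbs_mono[OF absorbs_compact[OF V rc] closure_of_subset[OF Ft]] unfolding absorbs_def by blast
  obtain n :: nat where n: "n \<ge> 1" "inv (real n) \<le> \<alpha>" using exists_nat[OF a(1)] by blast
  have nc: "real n \<in> carrier G" using nat_in[OF n(1)] .
  have "H (inv (inv (real n))) ` F \<subseteq> V" using a(2)[rule_format, of "inv (real n)"] n nc by simp
  then show "\<exists>n::nat. n \<ge> 1 \<and> H (real n) ` F \<subseteq> V" using n nc by auto
next
  have nF: "nbhd X \<omega> F" using F unfolding elementary_def by blast
  then have Ft: "F \<subseteq> topspace X" unfolding nbhd_def by blast
  show "(\<Union>n\<in>{n::nat. n \<ge> 1}. H (inv (real n)) ` F) = topspace X"
  proof
    show "(\<Union>n\<in>{n::nat. n \<ge> 1}. H (inv (real n)) ` F) \<subseteq> topspace X"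
      using Ft H_in nat_in by auto
    show "topspace X \<subseteq> (\<Union>n\<in>{n::nat. n \<ge> 1}. H (inv (real n)) ` F)"
    proof
      fix x assume x: "x \<in> topspace X"
      obtain U \<alpha> where a: "openin X U" "x \<in> U" "\<alpha> \<in> carrier G"
        "\<forall>\<epsilon>\<in>carrier G. \<epsilon> \<le> \<alpha> \<longrightarrow> H (inv \<epsilon>) ` U \<subseteq> F"
        using ABS_open[OF nF x] by blast
      obtain n :: nat where n: "n \<ge> 1" "inv (real n) \<le> \<alpha>" using exists_nat[OF a(3)] by blast
      have nc: "real n \<in> carrier G" using nat_in[OF n(1)] .
      have "H (inv (inv (real n))) x \<in> F" using a(2,4) n nc by blast
      hence "H (real n) x \<in> F" using nc by simp
      moreover have "x = H (inv (real n)) (H (real n) x)" using H_cancel_inv nc x by simp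
      ultimately show "x \<in> (\<Union>n\<in>{n::nat. n \<ge> 1}. H (inv (real n)) ` F)" using n by blast
    qed
  qed
qed

end



theorem proposition2p3:
  fixes G :: "real monoid" and X :: "'a topology" and H :: "real \<Rightarrow> 'a \<Rightarrow> 'a" and \<omega> :: 'a
  assumes "R_group G"
    and "Hausdorff_space X" and "locally_compact_space X"
    and "\<exists>x\<in>topspace X. \<exists>y\<in>topspace X. x \<noteq> y"
    and "continuous_action G X H"
    and "absorptive_center G X H \<omega>"
  shows "(\<forall>V. nbhd X \<omega> V \<longrightarrow>
            (\<exists>W. nbhd X \<omega> W \<and> W \<subseteq> V \<and> balanced G H W \<and> absorbent G X H W))
    \<and> (\<forall>T. T \<subseteq> topspace X \<longrightarrow> (bounded_set G X H \<omega> T \<longleftrightarrow> relatively_compact X T))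
    \<and> (\<exists>F. elementary G X H \<omega> F)
    \<and> (\<forall>F. elementary G X H \<omega> F \<longrightarrow>
          (\<forall>n::nat. n \<ge> 1 \<longrightarrow> nbhd X \<omega> (H (real n) ` F))
        \<and> (\<forall>V. nbhd X \<omega> V \<longrightarrow> (\<exists>n::nat. n \<ge> 1 \<and> H (real n) ` F \<subseteq> V))
        \<and> (\<Union>n\<in>{n::nat. n \<ge> 1}. H (inv\<^bsub>G\<^esub> (real n)) ` F) = topspace X)"
proof -
  have c1: "comm_group G" using assms(1) unfolding R_group_def by blast
  have c2: "\<And>n::nat. n \<ge> 1 \<Longrightarrow> real n \<in> carrier G" using assms(1) unfolding R_group_def by blast
  have c3: "\<And>a b c. a \<in> carrier G \<Longrightarrow> b \<in> carrier G \<Longrightarrow> c \<in> carrier G \<Longrightarrow> a \<le> b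
               \<Longrightarrow> a \<otimes>\<^bsub>G\<^esub> c \<le> b \<otimes>\<^bsub>G\<^esub> c" using assms(1) unfolding R_group_def by blast
  interpret ctx G X H \<omega> by (rule ctx.intro[OF c1 c2 c3 assms(5,6,2,3)])
  show ?thesis using part1 part2 part3a part3b by blast
qed

end
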